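(* Let $K\ge 1$ and $q\ge 2$ be integers, and let $i\neq j$ be two elements of the alphabet $\{0,1,\dots,q-1\}$. For $p\in\{1,\dots,K\}$ let $$\mathcal{S}^{(p)}_{i,j}=\bigl\{(\bm m+p\,\bm e_i,\ \bm m+p\,\bm e_j)\ :\ \bm m\in\mathbb{N}_0^{q},\ \textstyle\sum_{\ell=0}^{q-1}m_\ell=K-p\bigr\},$$ and let $\mathcal{S}_{i,j}=\bigcup_{p=1}^{K}\mathcal{S}^{(p)}_{i,j}$. Then $$|\mathcal{S}_{i,j}|=\binom{K+q-1}{q}.$$
   Context: $K$ nodes each hold a quantized value in the alphabet $\{0,1,\dots,q-1\}$. For a symmetric function of the nodes' values only the histogram of the input vector matters: the histogram is $\bm h=(h_0,\dots,h_{q-1})\in\mathbb{N}_0^q$ with $h_\ell$ the number of nodes holding value $\ell$, so $\sum_\ell h_\ell=K$. Here $\mathbb{N}_0=\{0,1,2,\dots\}$ and $\bm e_\ell$ denotes the $\ell$-th standard basis vector of $\mathbb{N}_0^q$ (indices $0,\dots,q-1$). The set $\mathcal{S}^{(p)}_{i,j}$ consists of the pairs of histograms of two input configurations that differ in exactly $p$ nodes, each of which holds value $i$ in the first configuration and value $j$ in the second, while the remaining $K-p$ nodes hold identical values in both configurations (the common part being described by the histogram $\bm m$). *)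

theory Defs
  imports Main
begin

text \<open>Histograms in N_0^q are represented as functions nat => nat vanishing
outside the index range {..<q}.\<close>

definition hist_set :: "nat \<Rightarrow> nat \<Rightarrow> (nat \<Rightarrow> nat) set" where
  "hist_set q n = {m. (\<forall>l. q \<le> l \<longrightarrow> m l = 0) \<and> (\<Sum>l<q. m l) = n}"

definition basis_vec :: "nat \<Rightarrow> nat \<Rightarrow> nat" where
  "basis_vec l = (\<lambda>k. if k = l then 1 else 0)"

definition S_p :: "nat \<Rightarrow> nat \<Rightarrow> nat \<Rightarrow> nat \<Rightarrow> nat \<Rightarrow> ((nat \<Rightarrow> nat) \<times> (nat \<Rightarrow> nat)) set" where
  "S_p q K p i j =
     (\<lambda>m. ((\<lambda>k. m k + p * basis_vec i k), (\<lambda>k. m k + p * basis_vec j k))) ` hist_set q (K - p)"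

definition S_all :: "nat \<Rightarrow> nat \<Rightarrow> nat \<Rightarrow> nat \<Rightarrow> ((nat \<Rightarrow> nat) \<times> (nat \<Rightarrow> nat)) set" where
  "S_all q K i j = (\<Union>p\<in>{1..K}. S_p q K p i j)"

end

theory Submission
  imports Defs "HOL-Library.Multiset"
begin

lemma size_sub: assumes "set_mset M \<subseteq> A" "finite A" shows "size M = sum (count M) A"
  unfolding size_multiset_overloaded_eq
  by (rule sum.mono_neutral_left) (use assms in \<open>auto simp: count_eq_zero_iff\<close>)

lemma card_hist_set:
  "card (hist_set q n) = (q + n - 1) choose n"
proof -
  have bij: "bij_betw count (multisets_of_size {..<q} n) (hist_set q n)"
  proof (rule bij_betw_imageI)
    show "inj_on count (multisets_of_size {..<q} n)"
      by (rule inj_onI) (metis multiset_eqI)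
    show "count ` multisets_of_size {..<q} n = hist_set q n"
    proof
      show "count ` multisets_of_size {..<q} n \<subseteq> hist_set q n"
      proof
        fix x assume "x \<in> count ` multisets_of_size {..<q} n"
        then obtain M where M: "set_mset M \<subseteq> {..<q}" "size M = n" "x = count M"
          by (auto simp: multisets_of_size_def)
        have "(\<Sum>l<q. count M l) = size M"
          using size_sub[OF M(1)] by simp
        then show "x \<in> hist_set q n" using M
          by (auto simp: hist_set_def count_eq_zero_iff)
      qed
    next
      show "hist_set q n \<subseteq> count ` multisets_of_size {..<q} n"
      proof
        fix m assume m: "m \<in> hist_set q n"
        have z: "\<And>l. q \<le> l \<Longrightarrow> m l = 0" using m by (simp add: hist_set_def)
        have supp: "{x. 0 < m x} \<subseteq> {..<q}"
        proof
          fix x assume "x \<in> {x. 0 < m x}"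
          hence "m x \<noteq> 0" by simp
          thus "x \<in> {..<q}" using z[of x] by (cases "q \<le> x") auto
        qed
        have fin: "finite {x. 0 < m x}" by (rule finite_subset[OF supp]) simp
        define M where "M = Abs_multiset m"
        have cM: "count M = m" using fin by (simp add: M_def count_Abs_multiset)
        have sub: "set_mset M \<subseteq> {..<q}"
        proof
          fix x assume "x \<in># M"
          hence "0 < m x" using cM by (metis count_eq_zero_iff gr0I)
          thus "x \<in> {..<q}" using supp by blast
        qed
        have "size M = (\<Sum>l<q. count M l)"
          using size_sub[OF sub] by simp
        hence "size M = n" using m cM by (simp add: hist_set_def)
        thus "m \<in> count ` multisets_of_size {..<q} n"
          using sub cM by (auto simp: multisets_of_size_def intro!: image_eqI[of _ _ M])
      qed
    qed
  qed
  have "card (hist_set q n) = card (multisets_of_size {..<q} n)"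
    using bij_betw_same_card[OF bij] by simp
  also have "\<dots> = (q + n - 1) choose n"
    by (simp add: card_multisets_of_size)
  finally show ?thesis .
qed

theorem lemma1:
  fixes K q i j :: nat
  assumes "K \<ge> 1" and "q \<ge> 2" and "i < q" and "j < q" and "i \<noteq> j"
  shows "card (S_all q K i j) = (K + q - 1) choose q"
proof -
  define f where "f = (\<lambda>m'::nat\<Rightarrow>nat.
     ((\<lambda>k. (if k < q then m' k else 0) + (m' q + 1) * basis_vec i k),
      (\<lambda>k. (if k < q then m' k else 0) + (m' q + 1) * basis_vec j k)))"
  have inj: "inj_on f (hist_set (Suc q) (K - 1))"
  proof (rule inj_onI)
    fix x y assume x: "x \<in> hist_set (Suc q) (K - 1)" and y: "y \<in> hist_set (Suc q) (K - 1)"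
      and e: "f x = f y"
    have e1: "(if k < q then x k else 0) + (x q + 1) * basis_vec i k
               = (if k < q then y k else 0) + (y q + 1) * basis_vec i k" for k
    proof -
      have "fst (f x) k = fst (f y) k" using e by simp
      thus ?thesis by (simp add: f_def)
    qed
    have e2: "(if k < q then x k else 0) + (x q + 1) * basis_vec j k
               = (if k < q then y k else 0) + (y q + 1) * basis_vec j k" for k
    proof -
      have "snd (f x) k = snd (f y) k" using e by simp
      thus ?thesis by (simp add: f_def)
    qed
    have a: "x j = y j" using e1[of j] assms by (simp add: basis_vec_def)
    have b: "x q = y q" using e2[of j] assms a by (simp add: basis_vec_def)
    show "x = y"
    proof
      fix k
      consider "k < q" | "k = q" | "k > q" by linarith
      then show "x k = y k"
      proof cases
        case 1 then show ?thesis using e1[of k] b by simp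
      next
        case 2 then show ?thesis using b by simp
      next
        case 3 then show ?thesis using x y by (simp add: hist_set_def)
      qed
    qed
  qed
  have img: "f ` hist_set (Suc q) (K - 1) = S_all q K i j"
  proof
    show "f ` hist_set (Suc q) (K - 1) \<subseteq> S_all q K i j"
    proof
      fix z assume "z \<in> f ` hist_set (Suc q) (K - 1)"
      then obtain m' where m': "m' \<in> hist_set (Suc q) (K - 1)" and z: "z = f m'" by blast
      define p where "p = m' q + 1"
      define m where "m = (\<lambda>k. if k < q then m' k else 0)"
      have s: "(\<Sum>l<q. m' l) + m' q = K - 1" using m' by (simp add: hist_set_def)
      have sm: "(\<Sum>l<q. m l) = (\<Sum>l<q. m' l)" by (simp add: m_def)
      have "p \<in> {1..K}" using s assms(1) by (auto simp: p_def)
      moreover have "m \<in> hist_set q (K - p)" using s sm by (auto simp: hist_set_def m_def p_def)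
      moreover have "z = ((\<lambda>k. m k + p * basis_vec i k), (\<lambda>k. m k + p * basis_vec j k))"
        by (simp add: z f_def m_def p_def)
      ultimately show "z \<in> S_all q K i j" unfolding S_all_def S_p_def by blast
    qed
  next
    show "S_all q K i j \<subseteq> f ` hist_set (Suc q) (K - 1)"
    proof
      fix z assume "z \<in> S_all q K i j"
      then obtain p m where p: "p \<in> {1..K}" and m: "m \<in> hist_set q (K - p)"
        and z: "z = ((\<lambda>k. m k + p * basis_vec i k), (\<lambda>k. m k + p * basis_vec j k))"
        unfolding S_all_def S_p_def by blast
      define m' where "m' = m(q := p - 1)"
      have r: "(\<lambda>k. if k < q then m' k else 0) = m"
        using m by (auto simp: m'_def hist_set_def)
      have mq: "m' q = p - 1" by (simp add: m'_def)
      have "f m' = z" unfolding f_def z using p mq fun_cong[OF r] by simp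
      moreover have "m' \<in> hist_set (Suc q) (K - 1)"
      proof -
        have "(\<Sum>l<Suc q. m' l) = (\<Sum>l<q. m l) + (p - 1)"
          by (simp add: m'_def)
        also have "\<dots> = K - 1" using m p by (simp add: hist_set_def)
        finally show ?thesis using m by (auto simp: hist_set_def m'_def)
      qed
      ultimately show "z \<in> f ` hist_set (Suc q) (K - 1)" by blast
    qed
  qed
  have "card (S_all q K i j) = card (hist_set (Suc q) (K - 1))"
    using card_image[OF inj] img by simp
  also have "\<dots> = (q + (K - 1)) choose (K - 1)" by (simp add: card_hist_set)
  also have "\<dots> = (q + (K - 1)) choose q"
    using binomial_symmetric[of "K-1" "q + (K-1)"] by simp
  also have "\<dots> = (K + q - 1) choose q" using assms(1) by (simp add: add.commute)
  finally show ?thesis .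
qed

end
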